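(* Let $\Phi=(A;A^*;\{E_i\}_{i=0}^d;\{E^*_i\}_{i=0}^d)$ be a Leonard system in $\mathcal A$, with $x_i$ and $p_i$ as defined below. Then $x_1x_2\cdots x_i\neq 0$ and $$E^*_i=\frac{p_i(A)\,E^*_0\,p_i(A)}{x_1x_2\cdots x_i}\qquad(0\le i\le d).$$
   Context: Let $\mathbb K$ be a field, $d\ge 0$ an integer, and $\mathcal A$ a $\mathbb K$-algebra isomorphic to the full matrix algebra $\mathrm{Mat}_{d+1}(\mathbb K)$; $I$ is its identity. An element of $\mathcal A$ is multiplicity-free if it has $d+1$ mutually distinct eigenvalues in $\mathbb K$. If $A$ is multiplicity-free with eigenvalues $\theta_0,\dots,\theta_d$, the primitive idempotent of $A$ associated with $\theta_i$ is $E_i=\prod_{j\ne i}(A-\theta_jI)/(\theta_i-\theta_j)$. A Leonard system in $\mathcal A$ is a sequence $\Phi=(A;A^*;\{E_i\}_{i=0}^d;\{E^*_i\}_{i=0}^d)$ such that (i) $A,A^*\in\mathcal A$ are multiplicity-free; (ii) $E_0,\dots,E_d$ is an ordering of the primitive idempotents of $A$; (iii) $E^*_0,\dots,E^*_d$ is an ordering of the primitive idempotents of $A^*$; (iv) $E_iA^*E_j=0$ if $|i-j|>1$ and $E_iA^*E_j\ne0$ if $|i-j|=1$ ($0\le i,j\le d$); (v) $E^*_iAE^*_j=0$ if $|i-j|>1$ and $E^*_iAE^*_j\ne0$ if $|i-j|=1$ ($0\le i,j\le d$). Here $A^*$ is merely notation (not an adjoint). Define $a_i=\mathrm{tr}(E^*_iA)$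 ($0\le i\le d$), $x_i=\mathrm{tr}(E^*_iAE^*_{i-1}A)$ ($1\le i\le d$), $x_0=0$. Define polynomials $p_0,\dots,p_{d+1}\in\mathbb K[\lambda]$ by $p_{-1}=0$, $p_0=1$, and $\lambda p_i=p_{i+1}+a_ip_i+x_ip_{i-1}$ for $0\le i\le d$. The empty product $x_1\cdots x_0$ equals $1$. *)

theory Defs
  imports "Jordan_Normal_Form.Char_Poly" "HOL-Computational_Algebra.Polynomial"
begin

text \<open>The algebra is realised concretely as the (d+1) x (d+1) matrices over a field.\<close>

definition mat_trace :: "'a::comm_ring_1 mat \<Rightarrow> 'a" where
  "mat_trace M = (\<Sum>i<dim_row M. M $$ (i, i))"

definition poly_mat :: "'a::comm_ring_1 poly \<Rightarrow> 'a mat \<Rightarrow> 'a mat" where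
  "poly_mat p M = fold_coeffs (\<lambda>c B. c \<cdot>\<^sub>m 1\<^sub>m (dim_row M) + M * B) p (0\<^sub>m (dim_row M) (dim_row M))"

definition prim_idem :: "nat \<Rightarrow> 'a::field mat \<Rightarrow> (nat \<Rightarrow> 'a) \<Rightarrow> nat \<Rightarrow> 'a mat" where
  "prim_idem d M \<theta> i =
     foldr (*) (map (\<lambda>j. (1 / (\<theta> i - \<theta> j)) \<cdot>\<^sub>m (M - \<theta> j \<cdot>\<^sub>m 1\<^sub>m (d+1)))
                    (filter (\<lambda>j. j \<noteq> i) [0..<d+1])) (1\<^sub>m (d+1))"

definition multiplicity_free :: "nat \<Rightarrow> 'a::field mat \<Rightarrow> bool" where
  "multiplicity_free d M \<longleftrightarrow>
     M \<in> carrier_mat (d+1) (d+1) \<and>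
     (\<exists>\<theta>. inj_on \<theta> {..d} \<and> (\<forall>i\<le>d. eigenvalue M (\<theta> i)))"

definition prim_idem_ordering :: "nat \<Rightarrow> 'a::field mat \<Rightarrow> (nat \<Rightarrow> 'a mat) \<Rightarrow> bool" where
  "prim_idem_ordering d M E \<longleftrightarrow>
     (\<exists>\<theta>. inj_on \<theta> {..d} \<and> (\<forall>i\<le>d. eigenvalue M (\<theta> i)) \<and>
          (\<forall>i\<le>d. E i = prim_idem d M \<theta> i))"

definition leonard_system ::
  "nat \<Rightarrow> 'a::field mat \<Rightarrow> 'a mat \<Rightarrow> (nat \<Rightarrow> 'a mat) \<Rightarrow> (nat \<Rightarrow> 'a mat) \<Rightarrow> bool" where
  "leonard_system d A As E Es \<longleftrightarrow>
     multiplicity_free d A \<and> multiplicity_free d As \<and>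
     prim_idem_ordering d A E \<and> prim_idem_ordering d As Es \<and>
     (\<forall>i\<le>d. \<forall>j\<le>d.
        ((i > j + 1 \<or> j > i + 1) \<longrightarrow> E i * As * E j = 0\<^sub>m (d+1) (d+1)) \<and>
        ((i = j + 1 \<or> j = i + 1) \<longrightarrow> E i * As * E j \<noteq> 0\<^sub>m (d+1) (d+1))) \<and>
     (\<forall>i\<le>d. \<forall>j\<le>d.
        ((i > j + 1 \<or> j > i + 1) \<longrightarrow> Es i * A * Es j = 0\<^sub>m (d+1) (d+1)) \<and>
        ((i = j + 1 \<or> j = i + 1) \<longrightarrow> Es i * A * Es j \<noteq> 0\<^sub>m (d+1) (d+1)))"

definition ls_a :: "'a::field mat \<Rightarrow> (nat \<Rightarrow> 'a mat) \<Rightarrow> nat \<Rightarrow> 'a" where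
  "ls_a A Es i = mat_trace (Es i * A)"

definition ls_x :: "'a::field mat \<Rightarrow> (nat \<Rightarrow> 'a mat) \<Rightarrow> nat \<Rightarrow> 'a" where
  "ls_x A Es i = (if i = 0 then 0 else mat_trace (Es i * A * Es (i - 1) * A))"

fun ls_p :: "(nat \<Rightarrow> 'a::field) \<Rightarrow> (nat \<Rightarrow> 'a) \<Rightarrow> nat \<Rightarrow> 'a poly" where
  "ls_p a x 0 = 1"
| "ls_p a x (Suc 0) = [:- a 0, 1:]"
| "ls_p a x (Suc (Suc i)) =
     [:- a (Suc i), 1:] * ls_p a x (Suc i) - Polynomial.smult (x (Suc i)) (ls_p a x i)"

end

theory Submission
  imports Defs
begin

declare minus_carrier_mat[simp]

lemma mult_carrier_sq[simp]:
  "A \<in> carrier_mat n n \<Longrightarrow> B \<in> carrier_mat n n \<Longrightarrow> A * B \<in> carrier_mat n n"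
  by (rule mult_carrier_mat)

lemma mat_trace_comm:
  fixes A B :: "'a::comm_ring_1 mat"
  assumes A: "A \<in> carrier_mat n m" and B: "B \<in> carrier_mat m n"
  shows "mat_trace (A * B) = mat_trace (B * A)"
proof -
  have "mat_trace (A * B) = (\<Sum>i<n. \<Sum>k<m. A $$ (i,k) * B $$ (k,i))"
    using A B by (simp add: mat_trace_def scalar_prod_def atLeast0LessThan)
  also have "\<dots> = (\<Sum>k<m. \<Sum>i<n. B $$ (k,i) * A $$ (i,k))"
    by (subst sum.swap) (simp add: mult.commute)
  also have "\<dots> = mat_trace (B * A)"
    using A B by (simp add: mat_trace_def scalar_prod_def atLeast0LessThan)
  finally show ?thesis .
qed

lemma mat_trace_smult: "A \<in> carrier_mat n n \<Longrightarrow> mat_trace (c \<cdot>\<^sub>m A) = c * mat_trace A"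
  by (simp add: mat_trace_def sum_distrib_left)

definition dunit :: "nat \<Rightarrow> nat \<Rightarrow> 'a::field mat" where
  "dunit n j = mat n n (\<lambda>(r,c). if r = j \<and> c = j then 1 else 0)"

lemma dunit_carrier[simp]: "dunit n j \<in> carrier_mat n n"
  by (simp add: dunit_def)

lemma dunit_dim[simp]: "dim_row (dunit n j) = n" "dim_col (dunit n j) = n"
  by (simp_all add: dunit_def)

lemma dunit_mult_left:
  assumes K: "K \<in> carrier_mat n m" and j: "j < n"
  shows "dunit n j * K = mat n m (\<lambda>(r,c). if r = j then K $$ (j,c) else 0)"
proof (rule eq_matI)
  fix r c assume r: "r < dim_row (mat n m (\<lambda>(r,c). if r = j then K $$ (j,c) else 0))"
    and c: "c < dim_col (mat n m (\<lambda>(r,c). if r = j then K $$ (j,c) else 0))"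
  have "(dunit n j * K) $$ (r,c) = (\<Sum>l<n. (if r = j \<and> l = j then 1 else 0) * K $$ (l,c))"
    using r c K by (simp add: dunit_def scalar_prod_def atLeast0LessThan)
  also have "\<dots> = (\<Sum>l<n. if l = j then (if r = j then K $$ (j,c) else 0) else 0)"
    by (rule sum.cong) auto
  also have "\<dots> = (if r = j then K $$ (j,c) else 0)"
    using j by simp
  finally show "(dunit n j * K) $$ (r,c) = mat n m (\<lambda>(r,c). if r = j then K $$ (j,c) else 0) $$ (r,c)"
    using r c by simp
qed (use K in \<open>auto simp: dunit_def\<close>)

lemma dunit_mult_right:
  assumes K: "K \<in> carrier_mat m n" and j: "j < n"
  shows "K * dunit n j = mat m n (\<lambda>(r,c). if c = j then K $$ (r,j) else 0)"
proof (rule eq_matI)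
  fix r c assume r: "r < dim_row (mat m n (\<lambda>(r,c). if c = j then K $$ (r,j) else 0))"
    and c: "c < dim_col (mat m n (\<lambda>(r,c). if c = j then K $$ (r,j) else 0))"
  have "(K * dunit n j) $$ (r,c) = (\<Sum>l<n. K $$ (r,l) * (if l = j \<and> c = j then 1 else 0))"
    using r c K by (simp add: dunit_def scalar_prod_def atLeast0LessThan)
  also have "\<dots> = (\<Sum>l<n. if l = j then (if c = j then K $$ (r,j) else 0) else 0)"
    by (rule sum.cong) auto
  also have "\<dots> = (if c = j then K $$ (r,j) else 0)"
    using j by simp
  finally show "(K * dunit n j) $$ (r,c) = mat m n (\<lambda>(r,c). if c = j then K $$ (r,j) else 0) $$ (r,c)"
    using r c by simp
qed (use K in \<open>auto simp: dunit_def\<close>)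

lemma dunit_mult_dunit:
  assumes "j < n" "k < n"
  shows "dunit n j * dunit n k = (if j = k then dunit n j else 0\<^sub>m n n)"
  using assms by (subst dunit_mult_left[of _ n n]) (auto simp: dunit_def)

lemma dunit_sandwich:
  assumes K: "K \<in> carrier_mat n n" and j: "j < n"
  shows "dunit n j * K * dunit n j = K $$ (j,j) \<cdot>\<^sub>m dunit n j"
proof -
  have "dunit n j * K * dunit n j = mat n n (\<lambda>(r,c). if c = j then (dunit n j * K) $$ (r,j) else 0)"
    by (rule dunit_mult_right) (use K j mult_carrier_mat[OF dunit_carrier K] in auto)
  also have "\<dots> = K $$ (j,j) \<cdot>\<^sub>m dunit n j"
  proof -
    have e: "\<And>r. r < n \<Longrightarrow> (dunit n j * K) $$ (r,j) = (if r = j then K $$ (j,j) else 0)"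
      using dunit_mult_left[OF K j] j by simp
    show ?thesis by (rule eq_matI) (simp_all add: e del: index_mult_mat, auto simp: dunit_def)
  qed
  finally show ?thesis .
qed

lemma dunit_trace:
  assumes K: "K \<in> carrier_mat n n" and j: "j < n"
  shows "mat_trace (dunit n j * K) = K $$ (j,j)"
  using assms by (subst dunit_mult_left[of _ n n]) (auto simp: mat_trace_def if_distrib cong: if_cong)

lemma dunit_left_zero:
  assumes K: "K \<in> carrier_mat n m" and h: "\<And>j. j < n \<Longrightarrow> dunit n j * K = 0\<^sub>m n m"
  shows "K = 0\<^sub>m n m"
proof (rule eq_matI)
  fix r c assume "r < dim_row (0\<^sub>m n m)" "c < dim_col (0\<^sub>m n m)"
  hence rc: "r < n" "c < m" by auto
  have "(dunit n r * K) $$ (r,c) = 0" using h[OF rc(1)] rc by simp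
  thus "K $$ (r,c) = 0\<^sub>m n m $$ (r,c)" using rc K by (simp add: dunit_mult_left)
qed (use K in \<open>auto simp: dunit_def\<close>)

lemma dunit_right_zero:
  assumes K: "K \<in> carrier_mat m n" and h: "\<And>j. j < n \<Longrightarrow> K * dunit n j = 0\<^sub>m m n"
  shows "K = 0\<^sub>m m n"
proof (rule eq_matI)
  fix r c assume "r < dim_row (0\<^sub>m m n)" "c < dim_col (0\<^sub>m m n)"
  hence rc: "r < m" "c < n" by auto
  have "(K * dunit n c) $$ (r,c) = 0" using h[OF rc(2)] rc by simp
  thus "K $$ (r,c) = 0\<^sub>m m n $$ (r,c)" using rc K by (simp add: dunit_mult_right)
qed (use K in \<open>auto simp: dunit_def\<close>)


lemma mv_entry:
  fixes A :: "'a::comm_ring_1 mat"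
  assumes "A \<in> carrier_mat n m" "v \<in> carrier_vec m" "r < n"
  shows "(A *\<^sub>v v) $ r = (\<Sum>k<m. A $$ (r,k) * v $ k)"
  using assms by (simp add: scalar_prod_def atLeast0LessThan)

lemma factor_vec:
  fixes M :: "'a::field mat"
  assumes M: "M \<in> carrier_mat n n" and v: "v \<in> carrier_vec n" and ev: "M *\<^sub>v v = t \<cdot>\<^sub>v v"
  shows "(c \<cdot>\<^sub>m (M - s \<cdot>\<^sub>m 1\<^sub>m n)) *\<^sub>v v = (c * (t - s)) \<cdot>\<^sub>v v"
proof (rule eq_vecI)
  fix r assume "r < dim_vec ((c * (t - s)) \<cdot>\<^sub>v v)"
  hence r: "r < n" using v by simp
  have Mr: "(\<Sum>k<n. M $$ (r,k) * v $ k) = t * v $ r"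
    using mv_entry[OF M v r] ev r v by simp
  have "((c \<cdot>\<^sub>m (M - s \<cdot>\<^sub>m 1\<^sub>m n)) *\<^sub>v v) $ r
      = (\<Sum>k<n. (c * (M $$ (r,k) - s * (if r = k then 1 else 0))) * v $ k)"
    using M v r by (subst mv_entry[of _ n n]) auto
  also have "\<dots> = (\<Sum>k<n. c * (M $$ (r,k) * v $ k) - (if k = r then c * s * v $ r else 0))"
    by (rule sum.cong) (auto simp: algebra_simps)
  also have "\<dots> = c * (\<Sum>k<n. M $$ (r,k) * v $ k) - c * s * v $ r"
    using r by (simp add: sum_subtractf sum_distrib_left)
  also have "\<dots> = ((c * (t - s)) \<cdot>\<^sub>v v) $ r"
    using Mr r v by (simp add: algebra_simps)
  finally show "((c \<cdot>\<^sub>m (M - s \<cdot>\<^sub>m 1\<^sub>m n)) *\<^sub>v v) $ r = ((c * (t - s)) \<cdot>\<^sub>v v) $ r" .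
qed (use M v in auto)

lemma foldr_vec:
  fixes M :: "'a::field mat"
  assumes M: "M \<in> carrier_mat n n" and v: "v \<in> carrier_vec n" and ev: "M *\<^sub>v v = t \<cdot>\<^sub>v v"
  shows "foldr (*) (map (\<lambda>j. (1 / (\<theta> i - \<theta> j)) \<cdot>\<^sub>m (M - \<theta> j \<cdot>\<^sub>m 1\<^sub>m n)) js) (1\<^sub>m n) \<in> carrier_mat n n \<and>
    foldr (*) (map (\<lambda>j. (1 / (\<theta> i - \<theta> j)) \<cdot>\<^sub>m (M - \<theta> j \<cdot>\<^sub>m 1\<^sub>m n)) js) (1\<^sub>m n) *\<^sub>v v
      = prod_list (map (\<lambda>j. 1 / (\<theta> i - \<theta> j) * (t - \<theta> j)) js) \<cdot>\<^sub>v v"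
proof (induction js)
  case Nil
  then show ?case using v by simp
next
  case (Cons x js)
  let ?F = "foldr (*) (map (\<lambda>j. (1 / (\<theta> i - \<theta> j)) \<cdot>\<^sub>m (M - \<theta> j \<cdot>\<^sub>m 1\<^sub>m n)) js) (1\<^sub>m n)"
  let ?f = "(1 / (\<theta> i - \<theta> x)) \<cdot>\<^sub>m (M - \<theta> x \<cdot>\<^sub>m 1\<^sub>m n)"
  let ?P = "prod_list (map (\<lambda>j. 1 / (\<theta> i - \<theta> j) * (t - \<theta> j)) js)"
  have F: "?F \<in> carrier_mat n n" and Fv: "?F *\<^sub>v v = ?P \<cdot>\<^sub>v v" using Cons by auto
  have f: "?f \<in> carrier_mat n n" using M by auto
  have "(?f * ?F) *\<^sub>v v = ?f *\<^sub>v (?P \<cdot>\<^sub>v v)"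
    using f F v Fv by (simp add: assoc_mult_mat_vec[of _ n n _ n])
  also have "\<dots> = ?P \<cdot>\<^sub>v (?f *\<^sub>v v)" using f v by (rule mult_mat_vec)
  also have "\<dots> = ?P \<cdot>\<^sub>v ((1 / (\<theta> i - \<theta> x) * (t - \<theta> x)) \<cdot>\<^sub>v v)"
    using factor_vec[OF M v ev] by simp
  also have "\<dots> = (1 / (\<theta> i - \<theta> x) * (t - \<theta> x) * ?P) \<cdot>\<^sub>v v"
    by (simp add: smult_smult_assoc mult.commute)
  finally show ?case using f F by simp
qed

lemma prim_idem_carrier:
  fixes M :: "'a::field mat"
  assumes M: "M \<in> carrier_mat (d+1) (d+1)"
  shows "prim_idem d M \<theta> i \<in> carrier_mat (d+1) (d+1)"
proof -
  have "foldr (*) (map (\<lambda>j. (1 / (\<theta> i - \<theta> j)) \<cdot>\<^sub>m (M - \<theta> j \<cdot>\<^sub>m 1\<^sub>m (d+1))) js) (1\<^sub>m (d+1))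
     \<in> carrier_mat (d+1) (d+1)" for js
    by (induction js) (use M in auto)
  thus ?thesis unfolding prim_idem_def by blast
qed

lemma prim_idem_vec:
  fixes M :: "'a::field mat"
  assumes M: "M \<in> carrier_mat (d+1) (d+1)" and v: "v \<in> carrier_vec (d+1)"
    and ev: "M *\<^sub>v v = \<theta> k \<cdot>\<^sub>v v" and k: "k \<le> d" and i: "i \<le> d" and inj: "inj_on \<theta> {..d}"
  shows "prim_idem d M \<theta> i *\<^sub>v v = (if k = i then v else 0\<^sub>v (d+1))"
proof -
  let ?js = "filter (\<lambda>j. j \<noteq> i) [0..<d+1]"
  let ?g = "\<lambda>j. 1 / (\<theta> i - \<theta> j) * (\<theta> k - \<theta> j)"
  have "prim_idem d M \<theta> i *\<^sub>v v = prod_list (map ?g ?js) \<cdot>\<^sub>v v"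
    using foldr_vec[OF M v ev, of \<theta> i ?js] unfolding prim_idem_def by blast
  also have "\<dots> = (if k = i then v else 0\<^sub>v (d+1))"
  proof (cases "k = i")
    case True
    have "map ?g ?js = map (\<lambda>_. 1) ?js"
    proof (rule map_cong[OF refl])
      fix j assume "j \<in> set ?js"
      hence "j \<le> d" "j \<noteq> i" by (auto simp del: upt_Suc)
      hence "\<theta> i \<noteq> \<theta> j" using inj i unfolding inj_on_def by auto
      thus "?g j = 1" using True by simp
    qed
    moreover have "prod_list (map (\<lambda>_. 1::'a) xs) = 1" for xs :: "nat list"
      by (induction xs) auto
    ultimately have P1: "prod_list (map ?g ?js) = 1" by metis
    show ?thesis by (subst P1) (use True v in simp)
  next
    case False
    have "k \<in> set ?js" using False k by auto
    hence "0 \<in> set (map ?g ?js)" by force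
    hence "prod_list (map ?g ?js) = 0" by (simp add: prod_list_zero_iff)
    then show ?thesis using False v by auto
  qed
  finally show ?thesis .
qed


lemma mm_entry:
  fixes A :: "'a::comm_ring_1 mat"
  assumes "A \<in> carrier_mat n m" "B \<in> carrier_mat m p" "r < n" "c < p"
  shows "(A * B) $$ (r,c) = (\<Sum>l<m. A $$ (r,l) * B $$ (l,c))"
  using assms by (simp add: scalar_prod_def atLeast0LessThan)

lemma prim_idem_diag:
  fixes M :: "'a::field mat"
  assumes M: "M \<in> carrier_mat (d+1) (d+1)" and inj: "inj_on \<theta> {..d}"
    and ev: "\<forall>i\<le>d. eigenvalue M (\<theta> i)"
  shows "\<exists>S Si. S \<in> carrier_mat (d+1) (d+1) \<and> Si \<in> carrier_mat (d+1) (d+1) \<and>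
     S * Si = 1\<^sub>m (d+1) \<and> Si * S = 1\<^sub>m (d+1) \<and>
     (\<forall>i\<le>d. prim_idem d M \<theta> i = S * dunit (d+1) i * Si)"
proof -
  define n where "n = d + 1"
  have Mn: "M \<in> carrier_mat n n" using M n_def by simp
  have "\<forall>i\<in>{..d}. \<exists>w. eigenvector M w (\<theta> i)" using ev unfolding eigenvalue_def by auto
  then obtain v where v: "\<forall>i\<in>{..d}. eigenvector M (v i) (\<theta> i)" by (metis bchoice)
  have vc: "v i \<in> carrier_vec n" "v i \<noteq> 0\<^sub>v n" "M *\<^sub>v v i = \<theta> i \<cdot>\<^sub>v v i" if "i \<le> d" for i
    using v that Mn unfolding eigenvector_def by auto
  define S where "S = mat n n (\<lambda>(r,k). v k $ r)"
  have S: "S \<in> carrier_mat n n" unfolding S_def by simp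
  have E: "prim_idem d M \<theta> i \<in> carrier_mat n n" for i using prim_idem_carrier[OF M] n_def by simp
  have ES: "prim_idem d M \<theta> i * S = S * dunit n i" if i: "i \<le> d" for i
  proof (rule eq_matI)
    fix r k assume "r < dim_row (S * dunit n i)" "k < dim_col (S * dunit n i)"
    hence rk: "r < n" "k < n" using S by auto
    hence kd: "k \<le> d" using n_def by simp
    have "(prim_idem d M \<theta> i * S) $$ (r,k) = (\<Sum>l<n. prim_idem d M \<theta> i $$ (r,l) * v k $ l)"
      using mm_entry[OF E S rk] rk by (simp add: S_def)
    also have "\<dots> = (prim_idem d M \<theta> i *\<^sub>v v k) $ r"
      using mv_entry[OF E vc(1)[OF kd] rk(1)] by simp
    also have "\<dots> = (if k = i then v k $ r else 0)"
      using prim_idem_vec[OF M vc(1)[OF kd, unfolded n_def] vc(3)[OF kd] kd i inj] rk n_def by auto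
    also have "\<dots> = (S * dunit n i) $$ (r,k)"
      by (subst dunit_mult_right[OF S]) (use rk i n_def in \<open>auto simp: S_def\<close>)
    finally show "(prim_idem d M \<theta> i * S) $$ (r,k) = (S * dunit n i) $$ (r,k)" .
  qed (use S E in auto)
  have Sinj: "c = 0\<^sub>v n" if c: "c \<in> carrier_vec n" and Sc: "S *\<^sub>v c = 0\<^sub>v n" for c
  proof (rule eq_vecI)
    fix i assume "i < dim_vec (0\<^sub>v n)"
    hence i: "i < n" "i \<le> d" using n_def by auto
    have "(prim_idem d M \<theta> i * S) *\<^sub>v c = prim_idem d M \<theta> i *\<^sub>v (S *\<^sub>v c)"
      using E S c by (simp add: assoc_mult_mat_vec[of _ n n _ n])
    also have "\<dots> = 0\<^sub>v n" using Sc E[of i] by (intro eq_vecI) auto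
    finally have z: "(S * dunit n i) *\<^sub>v c = 0\<^sub>v n" using ES[OF i(2)] by simp
    have SD: "(S * dunit n i) $$ (r,k) = (if k = i then v i $ r else 0)" if "r < n" "k < n" for r k
      by (subst dunit_mult_right[OF S]) (use that i in \<open>auto simp: S_def\<close>)
    have "c $ i * v i $ r = 0" if r: "r < n" for r
    proof -
      have "0 = ((S * dunit n i) *\<^sub>v c) $ r" using z r by simp
      also have "\<dots> = (\<Sum>k<n. (S * dunit n i) $$ (r,k) * c $ k)"
        using mv_entry[OF _ c r, of "S * dunit n i"] S by simp
      also have "\<dots> = (\<Sum>k<n. if k = i then v i $ r * c $ i else 0)"
        by (rule sum.cong) (use r i in \<open>auto simp: SD simp del: index_mult_mat\<close>)
      also have "\<dots> = c $ i * v i $ r" using i by simp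
      finally show ?thesis by simp
    qed
    moreover obtain r where r: "r < n" "v i $ r \<noteq> 0"
      using vc(1,2)[OF i(2)] by (metis eq_vecI carrier_vecD index_zero_vec(1) index_zero_vec(2))
    ultimately show "c $ i = 0\<^sub>v n $ i" using i by force
  qed (use c in auto)
  have "det S \<noteq> 0" using det_0_iff_vec_prod_zero_field[OF S] Sinj by blast
  from det_non_zero_imp_unit[OF S this, of "()"]
  obtain Si where Si: "Si \<in> carrier_mat n n" "Si * S = 1\<^sub>m n" "S * Si = 1\<^sub>m n"
    unfolding Units_def ring_mat_def by auto
  have "prim_idem d M \<theta> i = S * dunit n i * Si" if i: "i \<le> d" for i
  proof -
    have "prim_idem d M \<theta> i = prim_idem d M \<theta> i * (S * Si)" using E[of i] Si by simp
    also have "\<dots> = (prim_idem d M \<theta> i * S) * Si" using assoc_mult_mat[OF E[of i] S Si(1)] by simp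
    also have "\<dots> = S * dunit n i * Si" using ES[OF i] by simp
    finally show ?thesis .
  qed
  thus ?thesis using S Si unfolding n_def by blast
qed


definition idem_fam :: "nat \<Rightarrow> nat \<Rightarrow> (nat \<Rightarrow> 'a::field mat) \<Rightarrow> bool" where
  "idem_fam n d E \<longleftrightarrow>
    (\<forall>j\<le>d. E j \<in> carrier_mat n n) \<and>
    (\<forall>j\<le>d. \<forall>k\<le>d. E j * E k = (if j = k then E j else 0\<^sub>m n n)) \<and>
    (\<forall>X\<in>carrier_mat n n. (\<forall>j\<le>d. E j * X = 0\<^sub>m n n) \<longrightarrow> X = 0\<^sub>m n n) \<and>
    (\<forall>X\<in>carrier_mat n n. (\<forall>j\<le>d. X * E j = 0\<^sub>m n n) \<longrightarrow> X = 0\<^sub>m n n) \<and>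
    (\<forall>j\<le>d. \<forall>X\<in>carrier_mat n n. E j * X * E j = mat_trace (E j * X) \<cdot>\<^sub>m E j) \<and>
    (\<forall>j\<le>d. mat_trace (E j) = 1)"

lemma idem_fam_from_diag:
  fixes S Si :: "'a::field mat"
  assumes S: "S \<in> carrier_mat n n" and Si: "Si \<in> carrier_mat n n"
    and SSi: "S * Si = 1\<^sub>m n" and SiS: "Si * S = 1\<^sub>m n" and n: "n = d + 1"
    and E: "\<forall>i\<le>d. E i = S * dunit n i * Si"
  shows "idem_fam n d E"
proof -
  have D: "dunit n j \<in> carrier_mat n n" for j by simp
  have SiSX: "Si * (S * X) = X" if "X \<in> carrier_mat n p" for X p
    using assoc_mult_mat[OF Si S that] SiS that by simp
  have SSiX: "S * (Si * X) = X" if "X \<in> carrier_mat n p" for X p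
    using assoc_mult_mat[OF S Si that] SSi that by simp
  have XSiS: "X * (Si * S) = X" if "X \<in> carrier_mat p n" for X p
    using SiS that by simp
  have Ec: "E j \<in> carrier_mat n n" if "j \<le> d" for j using E that mult_carrier_mat[OF mult_carrier_mat[OF S D] Si] by simp
  have orth: "E j * E k = (if j = k then E j else 0\<^sub>m n n)" if "j \<le> d" "k \<le> d" for j k
  proof -
    have "E j * E k = S * (dunit n j * (Si * (S * (dunit n k * Si))))"
      using E that S Si by (simp add: assoc_mult_mat[of _ n n _ n _ n])
    also have "\<dots> = S * ((dunit n j * dunit n k) * Si)"
      using Si by (simp add: SiSX[of _ n] assoc_mult_mat[of _ n n _ n _ n])
    also have "\<dots> = (if j = k then E j else 0\<^sub>m n n)"
      using that n E S Si by (simp add: dunit_mult_dunit assoc_mult_mat[of _ n n _ n _ n])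
    finally show ?thesis .
  qed
  have lz: "X = 0\<^sub>m n n" if X: "X \<in> carrier_mat n n" and h: "\<forall>j\<le>d. E j * X = 0\<^sub>m n n" for X
  proof -
    have "dunit n j * (Si * X) = 0\<^sub>m n n" if j: "j < n" for j
    proof -
      have "Si * (E j * X) = 0\<^sub>m n n" using h j n Si by simp
      moreover have "Si * (E j * X) = dunit n j * (Si * X)"
        using E j n S Si X by (simp add: assoc_mult_mat[of _ n n _ n _ n] SiSX[of _ n])
      ultimately show ?thesis by simp
    qed
    hence "Si * X = 0\<^sub>m n n" using dunit_left_zero[of "Si * X" n n] Si X by auto
    hence "S * (Si * X) = 0\<^sub>m n n" using S by simp
    thus ?thesis using SSiX[OF X] by simp
  qed
  have rz: "X = 0\<^sub>m n n" if X: "X \<in> carrier_mat n n" and h: "\<forall>j\<le>d. X * E j = 0\<^sub>m n n" for X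
  proof -
    have "(X * S) * dunit n j = 0\<^sub>m n n" if j: "j < n" for j
    proof -
      have "(X * E j) * S = 0\<^sub>m n n" using h j n S by simp
      moreover have "(X * E j) * S = (X * S) * dunit n j"
        using E j n S Si X by (simp add: assoc_mult_mat[of _ n n _ n _ n] XSiS[of _ n])
      ultimately show ?thesis by simp
    qed
    hence "X * S = 0\<^sub>m n n" using dunit_right_zero[of "X * S" n n] S X by auto
    hence "(X * S) * Si = 0\<^sub>m n n" using Si by simp
    thus ?thesis using SSi X S Si by (simp add: assoc_mult_mat[of _ n n _ n _ n])
  qed
  have tr: "mat_trace (E j * X) = (Si * X * S) $$ (j,j)" if j: "j \<le> d" and X: "X \<in> carrier_mat n n" for j X
  proof -
    have "mat_trace (E j * X) = mat_trace (S * (dunit n j * Si * X))"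
      using E j S Si X by (simp add: assoc_mult_mat[of _ n n _ n _ n])
    also have "\<dots> = mat_trace (dunit n j * Si * X * S)"
      using S Si X by (subst mat_trace_comm[of _ n n]) (auto simp: assoc_mult_mat[of _ n n _ n _ n])
    also have "\<dots> = mat_trace (dunit n j * (Si * X * S))"
      using S Si X by (simp add: assoc_mult_mat[of _ n n _ n _ n])
    also have "\<dots> = (Si * X * S) $$ (j,j)"
      by (rule dunit_trace) (use S Si X j n in auto)
    finally show ?thesis .
  qed
  have sm: "S * ((c \<cdot>\<^sub>m dunit n j) * Si) = c \<cdot>\<^sub>m (S * dunit n j * Si)" for c j
  proof -
    have "(c \<cdot>\<^sub>m dunit n j) * Si = c \<cdot>\<^sub>m (dunit n j * Si)" using Si by (rule mult_smult_assoc_mat[OF D])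
    moreover have "S * (c \<cdot>\<^sub>m (dunit n j * Si)) = c \<cdot>\<^sub>m (S * (dunit n j * Si))"
      by (rule mult_smult_distrib[OF S mult_carrier_sq[OF D Si]])
    ultimately show ?thesis using S Si by (simp add: assoc_mult_mat[of _ n n _ n _ n])
  qed
  have r1: "E j * X * E j = mat_trace (E j * X) \<cdot>\<^sub>m E j" if j: "j \<le> d" and X: "X \<in> carrier_mat n n" for j X
  proof -
    define K where "K = Si * X * S"
    have Kc: "K \<in> carrier_mat n n" unfolding K_def using S Si X by simp
    have jn: "j < n" using j n by simp
    have "E j * X * E j = S * ((dunit n j * K * dunit n j) * Si)"
      unfolding K_def using E j S Si X by (simp add: assoc_mult_mat[of _ n n _ n _ n] SiSX[of _ n])
    also have "\<dots> = S * ((K $$ (j,j) \<cdot>\<^sub>m dunit n j) * Si)"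
      by (simp only: dunit_sandwich[OF Kc jn])
    also have "\<dots> = K $$ (j,j) \<cdot>\<^sub>m E j" using sm E j by simp
    also have "\<dots> = mat_trace (E j * X) \<cdot>\<^sub>m E j" using tr[OF j X] unfolding K_def by simp
    finally show ?thesis .
  qed
  have t1: "mat_trace (E j) = 1" if j: "j \<le> d" for j
  proof -
    have "mat_trace (E j * 1\<^sub>m n) = (Si * 1\<^sub>m n * S) $$ (j,j)" using tr[OF j] by simp
    moreover have "Si * 1\<^sub>m n * S = 1\<^sub>m n" using Si SiS by simp
    ultimately show ?thesis using Ec[OF j] j n by simp
  qed
  show ?thesis unfolding idem_fam_def using Ec orth lz rz r1 t1 by blast
qed


lemma pm_0[simp]: "poly_mat 0 M = 0\<^sub>m (dim_row M) (dim_row M)"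
  by (simp add: poly_mat_def)

lemma pm_pCons:
  fixes M :: "'a::comm_ring_1 mat"
  assumes M: "M \<in> carrier_mat n n"
  shows "poly_mat (pCons a p) M = a \<cdot>\<^sub>m 1\<^sub>m n + M * poly_mat p M"
proof (cases "p = 0 \<and> a = 0")
  case True
  then show ?thesis using M by (intro eq_matI) auto
next
  case False
  hence "fold_coeffs (\<lambda>c B. c \<cdot>\<^sub>m 1\<^sub>m (dim_row M) + M * B) (pCons a p)
       = (\<lambda>B. a \<cdot>\<^sub>m 1\<^sub>m (dim_row M) + M * B) \<circ> fold_coeffs (\<lambda>c B. c \<cdot>\<^sub>m 1\<^sub>m (dim_row M) + M * B) p"
    by auto
  then show ?thesis using M unfolding poly_mat_def by simp
qed

lemma pm_carrier[simp]:
  fixes M :: "'a::comm_ring_1 mat"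
  assumes M: "M \<in> carrier_mat n n"
  shows "poly_mat p M \<in> carrier_mat n n"
proof (induction p)
  case 0
  then show ?case using M by simp
next
  case (pCons a p)
  then show ?case using M by (simp add: pm_pCons[OF M])
qed

lemma pm_dim[simp]:
  fixes M :: "'a::comm_ring_1 mat"
  assumes M: "M \<in> carrier_mat n n"
  shows "dim_row (poly_mat p M) = n" "dim_col (poly_mat p M) = n"
  using pm_carrier[OF M, of p] by auto

lemma pm_add:
  fixes M :: "'a::comm_ring_1 mat"
  assumes M: "M \<in> carrier_mat n n"
  shows "poly_mat (p + q) M = poly_mat p M + poly_mat q M"
proof (induction p arbitrary: q)
  case 0
  then show ?case using M pm_carrier[OF M, of q] by simp
next
  case (pCons a p)
  obtain b q' where q: "q = pCons b q'" by (cases q)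
  have P: "poly_mat p M \<in> carrier_mat n n" and Q: "poly_mat q' M \<in> carrier_mat n n" using M by auto
  have "poly_mat (pCons a p + q) M = (a + b) \<cdot>\<^sub>m 1\<^sub>m n + M * (poly_mat p M + poly_mat q' M)"
    using pCons q by (simp add: pm_pCons[OF M])
  also have "\<dots> = (a + b) \<cdot>\<^sub>m 1\<^sub>m n + (M * poly_mat p M + M * poly_mat q' M)"
    using M P Q by (simp add: mult_add_distrib_mat[OF M P Q])
  also have "\<dots> = poly_mat (pCons a p) M + poly_mat q M"
    unfolding q pm_pCons[OF M] using M P Q by (intro eq_matI) (auto simp: algebra_simps)
  finally show ?case .
qed

lemma pm_smult:
  fixes M :: "'a::comm_ring_1 mat"
  assumes M: "M \<in> carrier_mat n n"
  shows "poly_mat (Polynomial.smult c p) M = c \<cdot>\<^sub>m poly_mat p M"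
proof (induction p)
  case 0
  then show ?case using M by (intro eq_matI) auto
next
  case (pCons a p)
  have P: "poly_mat p M \<in> carrier_mat n n" using M by auto
  have "poly_mat (Polynomial.smult c (pCons a p)) M = (c * a) \<cdot>\<^sub>m 1\<^sub>m n + M * (c \<cdot>\<^sub>m poly_mat p M)"
    using pCons by (simp add: pm_pCons[OF M])
  also have "\<dots> = c \<cdot>\<^sub>m poly_mat (pCons a p) M"
    unfolding pm_pCons[OF M] using M P by (simp add: mult_smult_distrib[OF M P]) (intro eq_matI, auto simp: algebra_simps)
  finally show ?case .
qed

lemma pm_diff:
  fixes M :: "'a::comm_ring_1 mat"
  assumes M: "M \<in> carrier_mat n n"
  shows "poly_mat (p - q) M = poly_mat p M - poly_mat q M"
proof -
  have "poly_mat p M = poly_mat (p - q) M + poly_mat q M"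
    using pm_add[OF M, of "p - q" q] by simp
  thus ?thesis using pm_carrier[OF M, of "p - q"] pm_carrier[OF M, of q]
    by (intro eq_matI) auto
qed

lemma pm_comm:
  fixes M :: "'a::comm_ring_1 mat"
  assumes M: "M \<in> carrier_mat n n"
  shows "M * poly_mat p M = poly_mat p M * M"
proof (induction p)
  case 0
  then show ?case using M by simp
next
  case (pCons a p)
  have P: "poly_mat p M \<in> carrier_mat n n" using M by auto
  have "M * poly_mat (pCons a p) M = a \<cdot>\<^sub>m M + M * (M * poly_mat p M)"
    unfolding pm_pCons[OF M] using M P
    by (simp add: mult_add_distrib_mat[of M n n "a \<cdot>\<^sub>m 1\<^sub>m n" n "M * poly_mat p M"] mult_smult_distrib[OF M one_carrier_mat])
  also have "\<dots> = a \<cdot>\<^sub>m M + M * (poly_mat p M * M)" using pCons by simp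
  also have "\<dots> = poly_mat (pCons a p) M * M"
    unfolding pm_pCons[OF M] using M P
    by (simp add: add_mult_distrib_mat[of _ n n] mult_smult_assoc_mat[of _ n n] assoc_mult_mat[of M n n _ n M n])
  finally show ?case .
qed

lemma pm_transpose:
  fixes M :: "'a::comm_ring_1 mat"
  assumes M: "M \<in> carrier_mat n n"
  shows "poly_mat p (transpose_mat M) = transpose_mat (poly_mat p M)"
proof (induction p)
  case 0
  then show ?case using M by (intro eq_matI) auto
next
  case (pCons a p)
  have MT: "transpose_mat M \<in> carrier_mat n n" using M by simp
  have P: "poly_mat p M \<in> carrier_mat n n" using M by auto
  have "poly_mat (pCons a p) (transpose_mat M) = a \<cdot>\<^sub>m 1\<^sub>m n + transpose_mat M * transpose_mat (poly_mat p M)"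
    using pCons by (simp add: pm_pCons[OF MT])
  also have "\<dots> = a \<cdot>\<^sub>m 1\<^sub>m n + transpose_mat (poly_mat p M * M)"
    using transpose_mult[OF P M] by simp
  also have "\<dots> = transpose_mat (poly_mat (pCons a p) M)"
    unfolding pm_pCons[OF M] pm_comm[OF M] using M P by (intro eq_matI) auto
  finally show ?case .
qed

lemma pm_one:
  fixes M :: "'a::comm_ring_1 mat"
  assumes M: "M \<in> carrier_mat n n"
  shows "poly_mat 1 M = 1\<^sub>m n"
  using M by (simp add: one_pCons pm_pCons[OF M]) (intro eq_matI, auto)

lemma pm_lin:
  fixes M :: "'a::comm_ring_1 mat"
  assumes M: "M \<in> carrier_mat n n"
  shows "poly_mat ([:c, 1:] * q) M = M * poly_mat q M + c \<cdot>\<^sub>m poly_mat q M"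
proof -
  have "[:c, 1:] * q = pCons 0 q + Polynomial.smult c q" by simp
  hence "poly_mat ([:c, 1:] * q) M = poly_mat (pCons 0 q) M + c \<cdot>\<^sub>m poly_mat q M"
    using M by (simp add: pm_add[OF M] pm_smult[OF M] comm_add_mat[of _ n n])
  also have "poly_mat (pCons 0 q) M = M * poly_mat q M"
    unfolding pm_pCons[OF M] using M pm_carrier[OF M, of q] by (intro eq_matI) auto
  finally show ?thesis .
qed

lemma pm_lsp1:
  fixes M :: "'a::field mat"
  assumes M: "M \<in> carrier_mat n n"
  shows "poly_mat (ls_p a x (Suc 0)) M = M + (- a 0) \<cdot>\<^sub>m 1\<^sub>m n"
  using pm_lin[OF M, of "- a 0" 1] pm_one[OF M] M by simp

lemma pm_lsp2:
  fixes M :: "'a::field mat"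
  assumes M: "M \<in> carrier_mat n n"
  shows "poly_mat (ls_p a x (Suc (Suc i))) M =
     M * poly_mat (ls_p a x (Suc i)) M + (- a (Suc i)) \<cdot>\<^sub>m poly_mat (ls_p a x (Suc i)) M
     - x (Suc i) \<cdot>\<^sub>m poly_mat (ls_p a x i) M"
  unfolding ls_p.simps pm_diff[OF M] pm_lin[OF M] pm_smult[OF M] by simp


lemma dist_l:
  fixes B :: "'a::field mat"
  assumes B: "B \<in> carrier_mat n n" and U: "U \<in> carrier_mat n n" and V: "V \<in> carrier_mat n n"
    and W: "W \<in> carrier_mat n n"
  shows "B * (U + c \<cdot>\<^sub>m V - e \<cdot>\<^sub>m W) = B * U + c \<cdot>\<^sub>m (B * V) - e \<cdot>\<^sub>m (B * W)"
proof -
  have "B * (U + c \<cdot>\<^sub>m V - e \<cdot>\<^sub>m W) = B * (U + c \<cdot>\<^sub>m V) - B * (e \<cdot>\<^sub>m W)"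
    by (rule mult_minus_distrib_mat[of B n n]) (use B U V W in auto)
  also have "B * (U + c \<cdot>\<^sub>m V) = B * U + B * (c \<cdot>\<^sub>m V)"
    by (rule mult_add_distrib_mat[of B n n]) (use B U V in auto)
  finally show ?thesis using mult_smult_distrib[OF B V] mult_smult_distrib[OF B W] by simp
qed

lemma dist_r:
  fixes B :: "'a::field mat"
  assumes B: "B \<in> carrier_mat n n" and U: "U \<in> carrier_mat n n" and V: "V \<in> carrier_mat n n"
    and W: "W \<in> carrier_mat n n"
  shows "(U + c \<cdot>\<^sub>m V - e \<cdot>\<^sub>m W) * B = U * B + c \<cdot>\<^sub>m (V * B) - e \<cdot>\<^sub>m (W * B)"
proof -
  have "(U + c \<cdot>\<^sub>m V - e \<cdot>\<^sub>m W) * B = (U + c \<cdot>\<^sub>m V) * B - (e \<cdot>\<^sub>m W) * B"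
    by (rule minus_mult_distrib_mat[of _ n n]) (use B U V W in auto)
  also have "(U + c \<cdot>\<^sub>m V) * B = U * B + (c \<cdot>\<^sub>m V) * B"
    by (rule add_mult_distrib_mat[of _ n n]) (use B U V in auto)
  finally show ?thesis using mult_smult_assoc_mat[OF V B] mult_smult_assoc_mat[OF W B] by simp
qed

fun chain :: "(nat \<Rightarrow> 'a::field mat) \<Rightarrow> 'a mat \<Rightarrow> nat \<Rightarrow> 'a mat" where
  "chain E A 0 = E 0"
| "chain E A (Suc i) = E (Suc i) * A * chain E A i"

context
  fixes n d :: nat and E :: "nat \<Rightarrow> 'a::field mat" and A :: "'a mat" and a x :: "nat \<Rightarrow> 'a"
  assumes Ec: "\<And>j. j \<le> d \<Longrightarrow> E j \<in> carrier_mat n n"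
    and Ac: "A \<in> carrier_mat n n"
    and orth: "\<And>j k. j \<le> d \<Longrightarrow> k \<le> d \<Longrightarrow> E j * E k = (if j = k then E j else 0\<^sub>m n n)"
    and zer: "\<And>X. X \<in> carrier_mat n n \<Longrightarrow> (\<forall>j\<le>d. E j * X = 0\<^sub>m n n) \<Longrightarrow> X = 0\<^sub>m n n"
    and h4: "\<And>j. j \<le> d \<Longrightarrow> E j * A * E j = a j \<cdot>\<^sub>m E j"
    and h5: "\<And>j. 1 \<le> j \<Longrightarrow> j \<le> d \<Longrightarrow> E (j-1) * A * E j * A * E (j-1) = x j \<cdot>\<^sub>m E (j-1)"
    and h6: "\<And>j k. j \<le> d \<Longrightarrow> k \<le> d \<Longrightarrow> (j > k + 1 \<or> k > j + 1) \<Longrightarrow> E j * A * E k = 0\<^sub>m n n"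
begin

lemma chain_carrier: "i \<le> d \<Longrightarrow> chain E A i \<in> carrier_mat n n"
  by (induction i) (use Ec Ac in auto)

lemma chain_E: "j \<le> d \<Longrightarrow> i \<le> d \<Longrightarrow> E j * chain E A i = (if j = i then chain E A i else 0\<^sub>m n n)"
proof (cases i)
  case 0
  assume "j \<le> d" "i \<le> d"
  then show ?thesis using 0 orth by simp
next
  case (Suc k)
  assume j: "j \<le> d" and i: "i \<le> d"
  have C: "chain E A k \<in> carrier_mat n n" using chain_carrier i Suc by simp
  have "E j * chain E A i = (E j * E (Suc k)) * (A * chain E A k)"
    using Suc Ec[OF j] Ec[of "Suc k"] i Ac C by (simp add: assoc_mult_mat[of _ n n _ n _ n])
  also have "\<dots> = (if j = i then chain E A i else 0\<^sub>m n n)"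
    using orth[OF j, of "Suc k"] Suc i Ec[of "Suc k"] Ac C by (simp add: assoc_mult_mat[of _ n n _ n _ n])
  finally show ?thesis .
qed

lemma eqE:
  assumes X: "X \<in> carrier_mat n n" and Y: "Y \<in> carrier_mat n n"
    and h: "\<And>j. j \<le> d \<Longrightarrow> E j * X = E j * Y"
  shows "X = Y"
proof -
  have "X - Y = 0\<^sub>m n n"
  proof (rule zer)
    show "X - Y \<in> carrier_mat n n" using X Y by simp
    show "\<forall>j\<le>d. E j * (X - Y) = 0\<^sub>m n n"
    proof (intro allI impI)
      fix j assume j: "j \<le> d"
      have "E j * (X - Y) = E j * X - E j * Y" using mult_minus_distrib_mat[OF Ec[OF j] X Y] .
      thus "E j * (X - Y) = 0\<^sub>m n n" using h[OF j] Ec[OF j] Y by simp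
    qed
  qed
  show ?thesis
  proof (rule eq_matI)
    fix i j assume "i < dim_row Y" "j < dim_col Y"
    hence ij: "i < n" "j < n" using Y by auto
    have "(X - Y) $$ (i,j) = 0" using \<open>X - Y = 0\<^sub>m n n\<close> ij by simp
    thus "X $$ (i,j) = Y $$ (i,j)" using X Y ij by simp
  qed (use X Y in auto)
qed


lemma chain_poly: "i \<le> d \<Longrightarrow> poly_mat (ls_p a x i) A * E 0 = chain E A i"
proof (induction i rule: nat_less_induct)
  case (1 i)
  have E0: "E 0 \<in> carrier_mat n n" using Ec by simp
  show ?case
  proof (cases i)
    case 0
    then show ?thesis using pm_one[OF Ac] E0 by simp
  next
    case (Suc i')
    show ?thesis
    proof (cases i')
      case 0
      have i1: "i = 1" and d1: "1 \<le> d" using Suc 0 1 by auto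
      have E1: "E 1 \<in> carrier_mat n n" using Ec d1 by simp
      have "poly_mat (ls_p a x i) A * E 0 = (A + (- a 0) \<cdot>\<^sub>m 1\<^sub>m n - 0 \<cdot>\<^sub>m 1\<^sub>m n) * E 0"
      proof -
        have eq: "A + (- a 0) \<cdot>\<^sub>m 1\<^sub>m n - 0 \<cdot>\<^sub>m 1\<^sub>m n = A + (- a 0) \<cdot>\<^sub>m 1\<^sub>m n"
          using Ac by (intro eq_matI) auto
        show ?thesis unfolding eq using i1 pm_lsp1[OF Ac, of a x] by (simp add: One_nat_def)
      qed
      also have "\<dots> = A * E 0 + (- a 0) \<cdot>\<^sub>m E 0 - 0 \<cdot>\<^sub>m E 0"
        using dist_r[OF E0 Ac one_carrier_mat one_carrier_mat] E0 by simp
      also have "\<dots> = chain E A i"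
      proof (rule eqE)
        show "A * E 0 + - a 0 \<cdot>\<^sub>m E 0 - 0 \<cdot>\<^sub>m E 0 \<in> carrier_mat n n" using Ac E0 by simp
        show "chain E A i \<in> carrier_mat n n" using chain_carrier 1 by simp
        fix j assume j: "j \<le> d"
        have Ej: "E j \<in> carrier_mat n n" using Ec j by simp
        have "E j * (A * E 0 + - a 0 \<cdot>\<^sub>m E 0 - 0 \<cdot>\<^sub>m E 0) = E j * A * E 0 + (- a 0) \<cdot>\<^sub>m (E j * E 0) - 0 \<cdot>\<^sub>m (E j * E 0)"
          using dist_l[OF Ej _ E0 E0, of "A * E 0"] Ac E0 Ej by simp
        also have "\<dots> = E j * chain E A i"
        proof -
          consider "j = 0" | "j = 1" | "j > 1" by linarith
          then show ?thesis
          proof cases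
            case 1
            have "E j * chain E A i = 0\<^sub>m n n" using chain_E[OF j, of i] 1 i1 d1 by simp
            then show ?thesis using h4[of 0] orth[of 0 0] 1 E0 by (simp, (intro eq_matI, auto)?)
          next
            case 2
            have "E j * chain E A i = chain E A i" using chain_E[OF j, of i] 2 i1 d1 by simp
            moreover have "E 1 * E 0 = 0\<^sub>m n n" using orth[of 1 0] d1 by simp
            ultimately show ?thesis using 2 i1 E0 E1 Ac by (simp, (intro eq_matI, auto)?)
          next
            case 3
            have "E j * chain E A i = 0\<^sub>m n n" using chain_E[OF j, of i] 3 i1 d1 by simp
            moreover have "E j * E 0 = 0\<^sub>m n n" using orth[OF j, of 0] 3 by simp
            moreover have "E j * A * E 0 = 0\<^sub>m n n" using h6[OF j, of 0] 3 by simp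
            ultimately show ?thesis by (simp, (intro eq_matI, auto)?)
          qed
        qed
        finally show "E j * (A * E 0 + - a 0 \<cdot>\<^sub>m E 0 - 0 \<cdot>\<^sub>m E 0) = E j * chain E A i" .
      qed
      finally show ?thesis .
    next
      case (Suc k)
      have i2: "i = Suc (Suc k)" using Suc \<open>i = Suc i'\<close> by simp
      have kd: "Suc (Suc k) \<le> d" using 1 i2 by simp
      let ?P1 = "poly_mat (ls_p a x (Suc k)) A" and ?P0 = "poly_mat (ls_p a x k) A"
      let ?C1 = "chain E A (Suc k)" and ?C0 = "chain E A k"
      have P1: "?P1 \<in> carrier_mat n n" and P0: "?P0 \<in> carrier_mat n n" using Ac by auto
      have C1: "?C1 \<in> carrier_mat n n" by (rule chain_carrier) (use kd in simp)
      have C0: "?C0 \<in> carrier_mat n n" by (rule chain_carrier) (use kd in simp)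
      have C2: "chain E A i \<in> carrier_mat n n" by (rule chain_carrier) (use kd i2 in simp)
      have IH1: "?P1 * E 0 = ?C1" and IH0: "?P0 * E 0 = ?C0" using 1 i2 kd by auto
      have "poly_mat (ls_p a x i) A * E 0 = (A * ?P1 + (- a (Suc k)) \<cdot>\<^sub>m ?P1 - x (Suc k) \<cdot>\<^sub>m ?P0) * E 0"
        using i2 pm_lsp2[OF Ac, of a x k] by simp
      also have "\<dots> = A * ?C1 + (- a (Suc k)) \<cdot>\<^sub>m ?C1 - x (Suc k) \<cdot>\<^sub>m ?C0"
        using dist_r[OF E0 _ P1 P0, of "A * ?P1"] Ac P1 E0 IH1 IH0 by (simp add: assoc_mult_mat[of _ n n _ n _ n])
      also have "\<dots> = chain E A i"
      proof (rule eqE)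
        show "A * ?C1 + (- a (Suc k)) \<cdot>\<^sub>m ?C1 - x (Suc k) \<cdot>\<^sub>m ?C0 \<in> carrier_mat n n" using Ac C1 C0 by simp
        show "chain E A i \<in> carrier_mat n n" by (rule C2)
        fix j assume j: "j \<le> d"
        have Ej: "E j \<in> carrier_mat n n" using Ec j by simp
        have C1E: "?C1 = E (Suc k) * ?C1" using chain_E[of "Suc k" "Suc k"] kd by simp
        have C0E: "?C0 = E k * ?C0" using chain_E[of k k] kd by simp
        have "E j * (A * ?C1 + (- a (Suc k)) \<cdot>\<^sub>m ?C1 - x (Suc k) \<cdot>\<^sub>m ?C0)
            = E j * A * ?C1 + (- a (Suc k)) \<cdot>\<^sub>m (E j * ?C1) - x (Suc k) \<cdot>\<^sub>m (E j * ?C0)"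
          using dist_l[OF Ej _ C1 C0, of "A * ?C1"] Ac C1 Ej by (simp add: assoc_mult_mat[of _ n n _ n _ n])
        also have "\<dots> = E j * chain E A i"
        proof -
          consider "j = Suc (Suc k)" | "j = Suc k" | "j = k" | "j > Suc (Suc k) \<or> Suc k > j + 1" by linarith
          then show ?thesis
          proof cases
            case 1
            have "E j * chain E A i = chain E A i" using chain_E[OF j, of i] 1 i2 kd by simp
            moreover have "E j * ?C1 = 0\<^sub>m n n" using chain_E[OF j, of "Suc k"] 1 kd by simp
            moreover have "E j * ?C0 = 0\<^sub>m n n" using chain_E[OF j, of k] 1 kd by simp
            moreover have "E j * A * ?C1 = chain E A i" using 1 i2 by simp
            ultimately show ?thesis using carrier_matD[OF C2] by (simp, (intro eq_matI, auto)?)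
          next
            case 2
            have "E j * chain E A i = 0\<^sub>m n n" using chain_E[OF j, of i] 2 i2 kd by simp
            moreover have "E j * ?C1 = ?C1" using chain_E[OF j, of "Suc k"] 2 kd by simp
            moreover have "E j * ?C0 = 0\<^sub>m n n" using chain_E[OF j, of k] 2 kd by simp
            moreover have "E j * A * ?C1 = a (Suc k) \<cdot>\<^sub>m ?C1"
            proof -
              have "E j * A * ?C1 = (E j * A * E j) * ?C1"
                using C1E 2 Ej Ac C1 by (metis assoc_mult_mat mult_carrier_sq)
              also have "\<dots> = a (Suc k) \<cdot>\<^sub>m (E j * ?C1)"
                using h4[OF j] Ej C1 mult_smult_assoc_mat[OF Ej C1, of "a (Suc k)"] 2 by simp
              finally show ?thesis using 2 \<open>E j * ?C1 = ?C1\<close> by simp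
            qed
            ultimately show ?thesis using carrier_matD[OF C1] by (simp, (intro eq_matI, auto)?)
          next
            case 3
            have "E j * chain E A i = 0\<^sub>m n n" using chain_E[OF j, of i] 3 i2 kd by simp
            moreover have "E j * ?C1 = 0\<^sub>m n n" using chain_E[OF j, of "Suc k"] 3 kd by simp
            moreover have "E j * ?C0 = ?C0" using chain_E[OF j, of k] 3 kd by simp
            moreover have "E j * A * ?C1 = x (Suc k) \<cdot>\<^sub>m ?C0"
            proof -
              have Ek: "E k \<in> carrier_mat n n" "E (Suc k) \<in> carrier_mat n n" using Ec kd by auto
              have "E j * A * ?C1 = (E k * A * E (Suc k) * A * E k) * ?C0"
                using C0E 3 Ek Ac C0 by (simp add: assoc_mult_mat[of _ n n _ n _ n])
              also have "\<dots> = x (Suc k) \<cdot>\<^sub>m (E k * ?C0)"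
                using h5[of "Suc k"] kd Ek C0 by (simp add: mult_smult_assoc_mat[OF Ek(1) C0])
              finally show ?thesis using C0E by simp
            qed
            ultimately show ?thesis using carrier_matD[OF C0] by (simp, (intro eq_matI, auto)?)
          next
            case 4
            have "E j * chain E A i = 0\<^sub>m n n" using chain_E[OF j, of i] 4 i2 kd by auto
            moreover have "E j * ?C1 = 0\<^sub>m n n" using chain_E[OF j, of "Suc k"] 4 kd by auto
            moreover have "E j * ?C0 = 0\<^sub>m n n" using chain_E[OF j, of k] 4 kd by auto
            moreover have "E j * A * ?C1 = 0\<^sub>m n n"
            proof -
              have "E j * A * ?C1 = (E j * A * E (Suc k)) * ?C1"
                using C1E Ej Ec[of "Suc k"] kd Ac C1 by (simp add: assoc_mult_mat[of _ n n _ n _ n])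
              also have "E j * A * E (Suc k) = 0\<^sub>m n n" using h6[OF j, of "Suc k"] 4 kd by auto
              finally show ?thesis using carrier_matD[OF C1] by simp
            qed
            ultimately show ?thesis by (simp, (intro eq_matI, auto)?)
          qed
        qed
        finally show "E j * (A * ?C1 + (- a (Suc k)) \<cdot>\<^sub>m ?C1 - x (Suc k) \<cdot>\<^sub>m ?C0) = E j * chain E A i" .
      qed
      finally show ?thesis .
    qed
  qed
qed

end


lemma nonzero_entry:
  assumes X: "X \<in> carrier_mat n m" and nz: "X \<noteq> 0\<^sub>m n m"
  obtains a b where "a < n" "b < m" "X $$ (a,b) \<noteq> 0"
proof -
  have "\<exists>a b. a < n \<and> b < m \<and> X $$ (a,b) \<noteq> 0"
  proof (rule ccontr)
    assume "\<not> ?thesis"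
    hence "X = 0\<^sub>m n m" using X by (intro eq_matI) auto
    thus False using nz by simp
  qed
  thus ?thesis using that by blast
qed

lemma sandwich_nonzero:
  fixes X Y :: "'a::field mat"
  assumes X: "X \<in> carrier_mat n n" and Y: "Y \<in> carrier_mat n n"
    and nX: "X \<noteq> 0\<^sub>m n n" and nY: "Y \<noteq> 0\<^sub>m n n"
  shows "\<exists>M\<in>carrier_mat n n. X * M * Y \<noteq> 0\<^sub>m n n"
proof -
  obtain a b where ab: "a < n" "b < n" "X $$ (a,b) \<noteq> 0" using nonzero_entry[OF X nX] .
  obtain c e where ce: "c < n" "e < n" "Y $$ (c,e) \<noteq> 0" using nonzero_entry[OF Y nY] .
  define M :: "'a mat" where "M = mat n n (\<lambda>(r,s). if r = b \<and> s = c then 1 else 0)"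
  have M: "M \<in> carrier_mat n n" unfolding M_def by simp
  have XM: "(X * M) $$ (a,s) = (if s = c then X $$ (a,b) else 0)" if s: "s < n" for s
  proof -
    have "(X * M) $$ (a,s) = (\<Sum>r<n. X $$ (a,r) * M $$ (r,s))" using mm_entry[OF X M ab(1) s] .
    also have "\<dots> = (\<Sum>r<n. if r = b then (if s = c then X $$ (a,b) else 0) else 0)"
      by (rule sum.cong) (use s in \<open>auto simp: M_def\<close>)
    also have "\<dots> = (if s = c then X $$ (a,b) else 0)" using ab by simp
    finally show ?thesis .
  qed
  have "(X * M * Y) $$ (a,e) = (\<Sum>s<n. (X * M) $$ (a,s) * Y $$ (s,e))"
    using mm_entry[OF mult_carrier_sq[OF X M] Y ab(1) ce(2)] .
  also have "\<dots> = (\<Sum>s<n. if s = c then X $$ (a,b) * Y $$ (c,e) else 0)"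
    by (rule sum.cong) (auto simp: XM)
  also have "\<dots> = X $$ (a,b) * Y $$ (c,e)" using ce by simp
  finally have "(X * M * Y) $$ (a,e) \<noteq> 0" using ab ce by simp
  hence "X * M * Y \<noteq> 0\<^sub>m n n" using ab ce by auto
  thus ?thesis using M by blast
qed

lemma transpose_smult_mat: "transpose_mat (c \<cdot>\<^sub>m X) = c \<cdot>\<^sub>m transpose_mat X"
  by (intro eq_matI) auto

lemma mat_trace_transpose: "X \<in> carrier_mat n n \<Longrightarrow> mat_trace (transpose_mat X) = mat_trace X"
  by (simp add: mat_trace_def)

theorem lemma8p6:
  fixes d :: nat and A As :: "'a::field mat" and E Es :: "nat \<Rightarrow> 'a mat"
  assumes "leonard_system d A As E Es"
  shows "\<forall>i\<le>d.
           (\<Prod>k\<in>{1..i}. ls_x A Es k) \<noteq> 0 \<and>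
           Es i = (1 / (\<Prod>k\<in>{1..i}. ls_x A Es k)) \<cdot>\<^sub>m
                    (poly_mat (ls_p (ls_a A Es) (ls_x A Es) i) A * Es 0 *
                     poly_mat (ls_p (ls_a A Es) (ls_x A Es) i) A)"
proof -
  define n where "n = d + 1"
  define a where "a = ls_a A Es"
  define x where "x = ls_x A Es"
  have LS: "multiplicity_free d A" "multiplicity_free d As" "prim_idem_ordering d As Es"
    and tri: "\<And>i j. i \<le> d \<Longrightarrow> j \<le> d \<Longrightarrow> (i > j + 1 \<or> j > i + 1) \<Longrightarrow> Es i * A * Es j = 0\<^sub>m n n"
    and nz: "\<And>i j. i \<le> d \<Longrightarrow> j \<le> d \<Longrightarrow> (i = j + 1 \<or> j = i + 1) \<Longrightarrow> Es i * A * Es j \<noteq> 0\<^sub>m n n"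
    using assms unfolding leonard_system_def n_def by blast+
  have Ac: "A \<in> carrier_mat n n" using LS(1) unfolding multiplicity_free_def n_def by blast
  have Asc: "As \<in> carrier_mat (d+1) (d+1)" using LS(2) unfolding multiplicity_free_def by blast
  obtain \<theta> where th: "inj_on \<theta> {..d}" "\<forall>i\<le>d. eigenvalue As (\<theta> i)" "\<forall>i\<le>d. Es i = prim_idem d As \<theta> i"
    using LS(3) unfolding prim_idem_ordering_def by blast
  obtain S Si where SS: "S \<in> carrier_mat (d+1) (d+1)" "Si \<in> carrier_mat (d+1) (d+1)"
     "S * Si = 1\<^sub>m (d+1)" "Si * S = 1\<^sub>m (d+1)" "\<forall>i\<le>d. prim_idem d As \<theta> i = S * dunit (d+1) i * Si"
    using prim_idem_diag[OF Asc th(1,2)] by blast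
  have "idem_fam n d Es"
    by (rule idem_fam_from_diag[of S n Si]) (use SS th(3) n_def in auto)
  hence Ec: "\<And>j. j \<le> d \<Longrightarrow> Es j \<in> carrier_mat n n"
    and orth: "\<And>j k. j \<le> d \<Longrightarrow> k \<le> d \<Longrightarrow> Es j * Es k = (if j = k then Es j else 0\<^sub>m n n)"
    and lz: "\<And>X. X \<in> carrier_mat n n \<Longrightarrow> (\<forall>j\<le>d. Es j * X = 0\<^sub>m n n) \<Longrightarrow> X = 0\<^sub>m n n"
    and rz: "\<And>X. X \<in> carrier_mat n n \<Longrightarrow> (\<forall>j\<le>d. X * Es j = 0\<^sub>m n n) \<Longrightarrow> X = 0\<^sub>m n n"
    and r1: "\<And>j X. j \<le> d \<Longrightarrow> X \<in> carrier_mat n n \<Longrightarrow> Es j * X * Es j = mat_trace (Es j * X) \<cdot>\<^sub>m Es j"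
    and t1: "\<And>j. j \<le> d \<Longrightarrow> mat_trace (Es j) = 1"
    unfolding idem_fam_def by blast+
  have h4: "Es j * A * Es j = a j \<cdot>\<^sub>m Es j" if j: "j \<le> d" for j
    using r1[OF j Ac] unfolding a_def ls_a_def .
  have h5: "Es (j-1) * A * Es j * A * Es (j-1) = x j \<cdot>\<^sub>m Es (j-1)" if j: "1 \<le> j" "j \<le> d" for j
  proof -
    have E1: "Es (j-1) \<in> carrier_mat n n" and E2: "Es j \<in> carrier_mat n n" using Ec j by auto
    have "Es (j-1) * A * Es j * A * Es (j-1) = Es (j-1) * (A * Es j * A) * Es (j-1)"
      using E1 E2 Ac by (simp add: assoc_mult_mat[of _ n n _ n _ n])
    also have "\<dots> = mat_trace (Es (j-1) * (A * Es j * A)) \<cdot>\<^sub>m Es (j-1)"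
      using r1[of "j-1" "A * Es j * A"] j E2 Ac by simp
    also have "mat_trace (Es (j-1) * (A * Es j * A)) = mat_trace ((Es (j-1) * A) * (Es j * A))"
      using E1 E2 Ac by (simp add: assoc_mult_mat[of _ n n _ n _ n])
    also have "\<dots> = mat_trace ((Es j * A) * (Es (j-1) * A))"
      by (rule mat_trace_comm) (use E1 E2 Ac in auto)
    also have "\<dots> = x j"
      unfolding x_def ls_x_def using j E1 E2 Ac by (simp add: assoc_mult_mat[of _ n n _ n _ n])
    finally show ?thesis .
  qed
  have h6: "\<And>j k. j \<le> d \<Longrightarrow> k \<le> d \<Longrightarrow> (j > k + 1 \<or> k > j + 1) \<Longrightarrow> Es j * A * Es k = 0\<^sub>m n n"
    using tri by blast
  have CP: "poly_mat (ls_p a x i) A * Es 0 = chain Es A i" if "i \<le> d" for i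
    using chain_poly[OF Ec Ac orth lz h4 h5 h6 that] by blast
  have DE: "Es j * chain Es A i = (if j = i then chain Es A i else 0\<^sub>m n n)" if "j \<le> d" "i \<le> d" for i j
    using chain_E[OF Ec Ac orth lz h4 h5 h6 that] by blast
  have Dc: "chain Es A i \<in> carrier_mat n n" if "i \<le> d" for i
    using chain_carrier[OF Ec Ac orth lz h4 h5 h6 that] by blast
  define Et where "Et = (\<lambda>j. transpose_mat (Es j))"
  define At where "At = transpose_mat A"
  have Etc: "\<And>j. j \<le> d \<Longrightarrow> Et j \<in> carrier_mat n n" using Ec unfolding Et_def by simp
  have Atc: "At \<in> carrier_mat n n" using Ac unfolding At_def by simp
  have orthT: "Et j * Et k = (if j = k then Et j else 0\<^sub>m n n)" if "j \<le> d" "k \<le> d" for j k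
  proof -
    have "Et j * Et k = transpose_mat (Es k * Es j)"
      unfolding Et_def using transpose_mult[OF Ec[OF that(2)] Ec[OF that(1)]] by simp
    thus ?thesis using orth[OF that(2,1)] unfolding Et_def by auto
  qed
  have lzT: "X = 0\<^sub>m n n" if X: "X \<in> carrier_mat n n" and h: "\<forall>j\<le>d. Et j * X = 0\<^sub>m n n" for X
  proof -
    have "transpose_mat X = 0\<^sub>m n n"
    proof (rule rz)
      show "transpose_mat X \<in> carrier_mat n n" using X by simp
      show "\<forall>j\<le>d. transpose_mat X * Es j = 0\<^sub>m n n"
      proof (intro allI impI)
        fix j assume j: "j \<le> d"
        have "transpose_mat X * Es j = transpose_mat (Et j * X)"
          unfolding Et_def using transpose_mult[OF transpose_carrier_mat[THEN iffD2, OF Ec[OF j]] X] by simp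
        thus "transpose_mat X * Es j = 0\<^sub>m n n" using h j by (simp, (intro eq_matI, auto)?)
      qed
    qed
    hence "transpose_mat (transpose_mat X) = 0\<^sub>m n n" by (simp, (intro eq_matI, auto)?)
    thus ?thesis by simp
  qed
  have tr3: "transpose_mat (X * Y * Z) = transpose_mat Z * transpose_mat Y * transpose_mat X"
    if "X \<in> carrier_mat n n" "Y \<in> carrier_mat n n" "Z \<in> carrier_mat n n" for X Y Z :: "'a mat"
    using that transpose_mult[OF mult_carrier_sq[OF that(1,2)] that(3)] transpose_mult[OF that(1,2)]
    by (simp add: assoc_mult_mat[of _ n n _ n _ n])
  have h4T: "Et j * At * Et j = a j \<cdot>\<^sub>m Et j" if j: "j \<le> d" for j
    using tr3[OF Ec[OF j] Ac Ec[OF j]] h4[OF j] unfolding Et_def At_def by (simp add: transpose_smult_mat)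
  have h5T: "Et (j-1) * At * Et j * At * Et (j-1) = x j \<cdot>\<^sub>m Et (j-1)" if j: "1 \<le> j" "j \<le> d" for j
  proof -
    have E1: "Es (j-1) \<in> carrier_mat n n" and E2: "Es j \<in> carrier_mat n n" using Ec j by auto
    have "Et (j-1) * At * Et j * At * Et (j-1) = transpose_mat (Es (j-1) * A * Es j * A * Es (j-1))"
      unfolding Et_def At_def using E1 E2 Ac
      by (simp add: transpose_mult[of _ n n _ n] assoc_mult_mat[of _ n n _ n _ n])
    thus ?thesis using h5[OF j] unfolding Et_def by (simp add: transpose_smult_mat)
  qed
  have h6T: "Et j * At * Et k = 0\<^sub>m n n" if "j \<le> d" "k \<le> d" "j > k + 1 \<or> k > j + 1" for j k
  proof -
    have "Et j * At * Et k = transpose_mat (Es k * A * Es j)"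
      unfolding Et_def At_def using tr3[OF Ec[OF that(2)] Ac Ec[OF that(1)]] by simp
    moreover have "transpose_mat (0\<^sub>m n n) = (0\<^sub>m n n :: 'a mat)" by (intro eq_matI) auto
    ultimately show ?thesis using h6[OF that(2,1)] that(3) by auto
  qed
  define U where "U = (\<lambda>i. transpose_mat (chain Et At i))"
  have CPT: "poly_mat (ls_p a x i) At * Et 0 = chain Et At i" if "i \<le> d" for i
    using chain_poly[OF Etc Atc orthT lzT h4T h5T h6T that] by blast
  have DET: "Et j * chain Et At i = (if j = i then chain Et At i else 0\<^sub>m n n)" if "j \<le> d" "i \<le> d" for i j
    using chain_E[OF Etc Atc orthT lzT h4T h5T h6T that] by blast
  have DcT: "chain Et At i \<in> carrier_mat n n" if "i \<le> d" for i
    using chain_carrier[OF Etc Atc orthT lzT h4T h5T h6T that] by blast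
  have Uc: "U i \<in> carrier_mat n n" if "i \<le> d" for i using DcT[OF that] unfolding U_def by simp
  have UP: "Es 0 * poly_mat (ls_p a x i) A = U i" if i: "i \<le> d" for i
  proof -
    have P: "poly_mat (ls_p a x i) A \<in> carrier_mat n n" using Ac by simp
    have "transpose_mat (Es 0 * poly_mat (ls_p a x i) A) = poly_mat (ls_p a x i) At * Et 0"
      unfolding Et_def At_def using transpose_mult[OF Ec[of 0] P] pm_transpose[OF Ac] by simp
    hence "transpose_mat (Es 0 * poly_mat (ls_p a x i) A) = chain Et At i" using CPT[OF i] by simp
    hence "transpose_mat (transpose_mat (Es 0 * poly_mat (ls_p a x i) A)) = U i" unfolding U_def by simp
    thus ?thesis by simp
  qed
  have EtT: "transpose_mat (Et j) = Es j" for j unfolding Et_def by simp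
  have AtT: "transpose_mat At = A" unfolding At_def by simp
  have UE: "U i * Es i = U i" if i: "i \<le> d" for i
  proof -
    have "transpose_mat (Et i * chain Et At i) = U i * Es i"
      using transpose_mult[OF Etc[OF i] DcT[OF i]] EtT unfolding U_def by simp
    thus ?thesis using DET[OF i i] unfolding U_def by simp
  qed
  have USuc: "U (Suc i) = U i * A * Es (Suc i)" if i: "Suc i \<le> d" for i
  proof -
    have "U (Suc i) = transpose_mat (Et (Suc i) * At * chain Et At i)" unfolding U_def by simp
    also have "\<dots> = U i * A * Es (Suc i)"
      using tr3[OF Etc[OF i] Atc DcT[of i]] i EtT AtT unfolding U_def by simp
    finally show ?thesis .
  qed
  have UD: "U i * chain Es A i = (\<Prod>k\<in>{1..i}. x k) \<cdot>\<^sub>m Es 0" if "i \<le> d" for i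
    using that
  proof (induction i)
    case 0
    have "U 0 = Es 0" unfolding U_def Et_def by simp
    then show ?case using orth[of 0 0] Ec[of 0] by (simp, (intro eq_matI, auto)?)
  next
    case (Suc i)
    have i: "i \<le> d" and si: "Suc i \<le> d" using Suc by auto
    have E1: "Es i \<in> carrier_mat n n" and E2: "Es (Suc i) \<in> carrier_mat n n" using Ec i si by auto
    have D: "chain Es A i \<in> carrier_mat n n" using Dc i by simp
    have Ui: "U i \<in> carrier_mat n n" using Uc i by simp
    have idem: "Es (Suc i) * (Es (Suc i) * Y) = Es (Suc i) * Y" if "Y \<in> carrier_mat n n" for Y
      using assoc_mult_mat[OF E2 E2 that] orth[OF si si] by simp
    have UE': "U i * (Es i * Y) = U i * Y" if "Y \<in> carrier_mat n n" for Y
      using assoc_mult_mat[OF Ui E1 that] UE[OF i] by simp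
    have DE': "Es i * chain Es A i = chain Es A i" using DE[OF i i] by simp
    have "U (Suc i) * chain Es A (Suc i) = U i * A * Es (Suc i) * (Es (Suc i) * A * chain Es A i)"
      using USuc[OF si] by simp
    also have "\<dots> = U i * A * Es (Suc i) * A * chain Es A i"
      using Ui Ac E2 D by (simp add: assoc_mult_mat[of _ n n _ n _ n] idem)
    also have "\<dots> = U i * (Es i * A * Es (Suc i) * A * Es i) * chain Es A i"
    proof -
      have "U i * (Es i * A * Es (Suc i) * A * Es i) * chain Es A i
          = U i * (Es i * (A * (Es (Suc i) * (A * (Es i * chain Es A i)))))"
        using Ui Ac E1 E2 D by (simp add: assoc_mult_mat[of _ n n _ n _ n])
      also have "\<dots> = U i * (A * (Es (Suc i) * (A * chain Es A i)))"
        using Ui Ac E1 E2 D by (simp add: UE' DE')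
      also have "\<dots> = U i * A * Es (Suc i) * A * chain Es A i"
        using Ui Ac E1 E2 D by (simp add: assoc_mult_mat[of _ n n _ n _ n])
      finally show ?thesis by simp
    qed
    also have "\<dots> = U i * (x (Suc i) \<cdot>\<^sub>m Es i) * chain Es A i"
      using h5[of "Suc i"] si by simp
    also have "\<dots> = x (Suc i) \<cdot>\<^sub>m (U i * (Es i * chain Es A i))"
      using Ui E1 D by (simp add: mult_smult_distrib[OF Ui] mult_smult_assoc_mat[of _ n n] assoc_mult_mat[of _ n n _ n _ n])
    also have "\<dots> = x (Suc i) \<cdot>\<^sub>m ((\<Prod>k\<in>{1..i}. x k) \<cdot>\<^sub>m Es 0)"
      using DE' Suc.IH i by simp
    also have "\<dots> = (\<Prod>k\<in>{1..Suc i}. x k) \<cdot>\<^sub>m Es 0"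
      using Ec[of 0] by (simp add: atLeastAtMostSuc_conv, (intro eq_matI, auto)?)
    finally show ?case .
  qed
  have xnz: "x k \<noteq> 0" if k: "1 \<le> k" "k \<le> d" for k
  proof
    assume x0: "x k = 0"
    have E1: "Es (k-1) \<in> carrier_mat n n" and E2: "Es k \<in> carrier_mat n n" using Ec k by auto
    have X: "Es (k-1) * A * Es k \<noteq> 0\<^sub>m n n" using nz[of "k-1" k] k by simp
    have Y: "Es k * A * Es (k-1) \<noteq> 0\<^sub>m n n" using nz[of k "k-1"] k by simp
    obtain M where M: "M \<in> carrier_mat n n" "(Es (k-1) * A * Es k) * M * (Es k * A * Es (k-1)) \<noteq> 0\<^sub>m n n"
      using sandwich_nonzero[OF mult_carrier_sq[OF mult_carrier_sq[OF E1 Ac] E2] mult_carrier_sq[OF mult_carrier_sq[OF E2 Ac] E1] X Y] by blast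
    have "(Es (k-1) * A * Es k) * M * (Es k * A * Es (k-1)) = Es (k-1) * A * (Es k * M * Es k) * A * Es (k-1)"
      using E1 E2 Ac M(1) by (simp add: assoc_mult_mat[of _ n n _ n _ n])
    also have "\<dots> = Es (k-1) * A * (mat_trace (Es k * M) \<cdot>\<^sub>m Es k) * A * Es (k-1)"
      using r1[OF k(2) M(1)] by simp
    also have "\<dots> = mat_trace (Es k * M) \<cdot>\<^sub>m (Es (k-1) * A * Es k * A * Es (k-1))"
      using E1 E2 Ac by (simp add: mult_smult_distrib[of _ n n] mult_smult_assoc_mat[of _ n n] assoc_mult_mat[of _ n n _ n _ n])
    also have "\<dots> = 0\<^sub>m n n" using h5[OF k] x0 E1 by (simp, (intro eq_matI, auto)?)
    finally show False using M(2) by simp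
  qed
  show ?thesis
  proof (intro allI impI)
    fix i assume i: "i \<le> d"
    define c where "c = (\<Prod>k\<in>{1..i}. x k)"
    have c0: "c \<noteq> 0" unfolding c_def using xnz i by (simp add: prod_zero_iff)
    define P where "P = poly_mat (ls_p a x i) A"
    have P: "P \<in> carrier_mat n n" unfolding P_def using Ac by simp
    have E0: "Es 0 \<in> carrier_mat n n" and Ei: "Es i \<in> carrier_mat n n" using Ec i by auto
    have D: "chain Es A i \<in> carrier_mat n n" and Ui: "U i \<in> carrier_mat n n" using Dc Uc i by auto
    have "P * Es 0 * P = (P * Es 0) * (Es 0 * P)"
      using P E0 orth[of 0 0] assoc_mult_mat[OF E0 E0 P] by (simp add: assoc_mult_mat[of _ n n _ n _ n])
    also have "\<dots> = chain Es A i * U i" using CP[OF i] UP[OF i] unfolding P_def by simp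
    also have "\<dots> = Es i * (chain Es A i * U i) * Es i"
    proof -
      have "Es i * (chain Es A i * U i) * Es i = (Es i * chain Es A i) * (U i * Es i)"
        using D Ui Ei by (simp add: assoc_mult_mat[of _ n n _ n _ n])
      thus ?thesis using DE[OF i i] UE[OF i] by simp
    qed
    also have "\<dots> = mat_trace (Es i * (chain Es A i * U i)) \<cdot>\<^sub>m Es i"
      using r1[OF i] D Ui by simp
    also have "mat_trace (Es i * (chain Es A i * U i)) = mat_trace (chain Es A i * U i)"
      using DE[OF i i] D Ui Ei by (simp add: assoc_mult_mat[of _ n n _ n _ n, symmetric])
    also have "\<dots> = mat_trace (U i * chain Es A i)" by (rule mat_trace_comm) (use D Ui in auto)
    also have "\<dots> = c" using UD[OF i] t1[of 0] mat_trace_smult[OF E0] unfolding c_def by simp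
    finally have PEP: "P * Es 0 * P = c \<cdot>\<^sub>m Es i" .
    have "Es i = (1 / c) \<cdot>\<^sub>m (P * Es 0 * P)"
      unfolding PEP using c0 Ei by (intro eq_matI) auto
    thus "(\<Prod>k\<in>{1..i}. ls_x A Es k) \<noteq> 0 \<and>
           Es i = (1 / (\<Prod>k\<in>{1..i}. ls_x A Es k)) \<cdot>\<^sub>m
                    (poly_mat (ls_p (ls_a A Es) (ls_x A Es) i) A * Es 0 *
                     poly_mat (ls_p (ls_a A Es) (ls_x A Es) i) A)"
      using c0 unfolding c_def P_def a_def x_def by simp
  qed
qed

end
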